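(* Let $\mathcal{M}$ be a finite $\mathcal{R}$-trivial monoid and let $\mathcal{S}$ be a generating set for $\mathcal{M}$ (as a monoid). Two elements $\sigma,\sigma'\in\mathcal{M}$ have the same loop-type if and only if $\mathcal{L}^{\mathcal{S}}_\sigma=\mathcal{L}^{\mathcal{S}}_{\sigma'}$.
   Context: $\mathcal{M}$ is $\mathcal{R}$-trivial: $\sigma\mathcal{M}=\tau\mathcal{M}$ implies $\sigma=\tau$. For $\sigma\in\mathcal{M}$, $\mathcal{L}_\sigma:=\{\tau\in\mathcal{M}:\sigma\tau=\sigma\}$ and $\mathcal{L}^{\mathcal{S}}_\sigma:=\mathcal{L}_\sigma\cap\mathcal{S}=\{\kappa\in\mathcal{S}:\sigma\kappa=\sigma\}$. Elements $\sigma,\sigma'$ have the same loop-type ($\sigma\sim\sigma'$) if $\mathcal{L}_\sigma=\mathcal{L}_{\sigma'}$. *)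

theory Defs
  imports Main
begin

definition R_trivial :: "'a::monoid_mult itself \<Rightarrow> bool" where
  "R_trivial _ \<longleftrightarrow> (\<forall>\<sigma> \<tau> :: 'a. range (\<lambda>x. \<sigma> * x) = range (\<lambda>x. \<tau> * x) \<longrightarrow> \<sigma> = \<tau>)"

inductive_set submonoid_gen :: "'a::monoid_mult set \<Rightarrow> 'a set" for S where
  one: "1 \<in> submonoid_gen S"
| gen: "s \<in> S \<Longrightarrow> s \<in> submonoid_gen S"
| mult: "x \<in> submonoid_gen S \<Longrightarrow> y \<in> submonoid_gen S \<Longrightarrow> x * y \<in> submonoid_gen S"

definition generates :: "'a::monoid_mult set \<Rightarrow> bool" where
  "generates S \<longleftrightarrow> submonoid_gen S = UNIV"

definition loops :: "'a::monoid_mult \<Rightarrow> 'a set" where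
  "loops \<sigma> = {\<tau>. \<sigma> * \<tau> = \<sigma>}"

definition loops_in :: "'a::monoid_mult set \<Rightarrow> 'a \<Rightarrow> 'a set" where
  "loops_in S \<sigma> = loops \<sigma> \<inter> S"

definition same_loop_type :: "'a::monoid_mult \<Rightarrow> 'a \<Rightarrow> bool" where
  "same_loop_type \<sigma> \<sigma>' \<longleftrightarrow> loops \<sigma> = loops \<sigma>'"

end

theory Submission
  imports Defs
begin

lemma key:
  fixes \<sigma> a b :: "'a::monoid_mult"
  assumes R: "R_trivial TYPE('a)" and h: "\<sigma> * a * b = \<sigma>"
  shows "\<sigma> * a = \<sigma>"
proof -
  have "range (\<lambda>x. (\<sigma> * a) * x) = range (\<lambda>x. \<sigma> * x)"
  proof
    show "range (\<lambda>x. (\<sigma> * a) * x) \<subseteq> range (\<lambda>x. \<sigma> * x)"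
      by (auto simp: mult.assoc)
    show "range (\<lambda>x. \<sigma> * x) \<subseteq> range (\<lambda>x. (\<sigma> * a) * x)"
    proof
      fix y assume "y \<in> range (\<lambda>x. \<sigma> * x)"
      then obtain x where "y = \<sigma> * x" by auto
      hence "y = (\<sigma> * a) * (b * x)" using h by (metis mult.assoc)
      thus "y \<in> range (\<lambda>x. (\<sigma> * a) * x)" by blast
    qed
  qed
  thus ?thesis using R unfolding R_trivial_def by blast
qed

lemma loops_eq:
  fixes S :: "'a::monoid_mult set"
  assumes R: "R_trivial TYPE('a)" and g: "generates S"
  shows "loops \<sigma> = submonoid_gen (loops_in S \<sigma>)"
proof
  show "loops \<sigma> \<subseteq> submonoid_gen (loops_in S \<sigma>)"
  proof
    fix \<tau> assume t: "\<tau> \<in> loops \<sigma>"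
    have "\<tau> \<in> submonoid_gen S" using g unfolding generates_def by simp
    hence "\<sigma> * \<tau> = \<sigma> \<longrightarrow> \<tau> \<in> submonoid_gen (loops_in S \<sigma>)"
    proof (induction rule: submonoid_gen.induct)
      case one then show ?case by (simp add: submonoid_gen.one)
    next
      case (gen s) then show ?case
        by (auto simp: loops_in_def loops_def intro: submonoid_gen.gen)
    next
      case (mult x y)
      show ?case
      proof
        assume e: "\<sigma> * (x * y) = \<sigma>"
        hence "\<sigma> * x = \<sigma>" using key[OF R, of \<sigma> x y] by (simp add: mult.assoc)
        moreover hence "\<sigma> * y = \<sigma>" using e by (metis mult.assoc)
        ultimately show "x * y \<in> submonoid_gen (loops_in S \<sigma>)"
          using mult.IH by (simp add: submonoid_gen.mult)
      qed
    qed
    thus "\<tau> \<in> submonoid_gen (loops_in S \<sigma>)" using t by (simp add: loops_def)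
  qed
  show "submonoid_gen (loops_in S \<sigma>) \<subseteq> loops \<sigma>"
  proof
    fix \<tau> assume "\<tau> \<in> submonoid_gen (loops_in S \<sigma>)"
    thus "\<tau> \<in> loops \<sigma>"
      by (induction rule: submonoid_gen.induct)
         (auto simp: loops_in_def loops_def, metis mult.assoc)
  qed
qed

theorem mainTheorem5:
  fixes S :: "'a::{monoid_mult, finite} set" and \<sigma> \<sigma>' :: 'a
  assumes "R_trivial TYPE('a)"
    and "generates S"
  shows "same_loop_type \<sigma> \<sigma>' \<longleftrightarrow> loops_in S \<sigma> = loops_in S \<sigma>'"
proof
  assume "same_loop_type \<sigma> \<sigma>'"
  thus "loops_in S \<sigma> = loops_in S \<sigma>'" by (simp add: same_loop_type_def loops_in_def)
next
  assume "loops_in S \<sigma> = loops_in S \<sigma>'"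
  thus "same_loop_type \<sigma> \<sigma>'"
    using loops_eq[OF assms, of \<sigma>] loops_eq[OF assms, of \<sigma>']
    by (simp add: same_loop_type_def)
qed

end
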